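(* Let $f : 2^V \to \mathbb{Z}_{\ge 0}$ be a connectivity function. If $W \subseteq V$ is a set with $f(W) > 2\,\mathtt{bw}(f)$, then there exists a tripartition $(C_1,C_2,C_3)$ of $V$ (parts may be empty) such that for each $i\in\{1,2,3\}$: $f(C_i) < f(W)/2$, $f(C_i\cap W) < f(W)$, and $f(C_i \cap (V\setminus W)) < f(W)$.
   Context: $V$ is a finite set. A function $f:2^V\to\mathbb{Z}_{\ge 0}$ is a connectivity function if $f(\emptyset)=0$, $f(X)=f(V\setminus X)$ for all $X\subseteq V$, and $f(X\cup Y)+f(X\cap Y)\le f(X)+f(Y)$ for all $X,Y\subseteq V$. A branch decomposition of $f$ is a pair $(T,L)$ where $T$ is a tree whose nodes have degree 1 or 3 and $L$ is a bijection from $V$ to the leaves of $T$ (such exist only when $|V|\ge 2$). Each edge $e$ of $T$ induces, via the components of $T-e$, a bipartition $(X,V\setminus X)$ of $V$, and its width is $f(X)$. The width of $(T,L)$ is the maximum edge width, and $\mathtt{bw}(f)$, the branchwidth of $f$, is the minimum width of a branch decomposition of $f$. A tripartition of $V$ is an ordered triple of pairwise disjoint sets (possibly empty) whose union is $V$. *)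

theory Defs
  imports Main
begin

definition connectivity_function :: "'a set \<Rightarrow> ('a set \<Rightarrow> nat) \<Rightarrow> bool" where
  "connectivity_function V f \<longleftrightarrow>
     f {} = 0 \<and>
     (\<forall>X. X \<subseteq> V \<longrightarrow> f X = f (V - X)) \<and>
     (\<forall>X Y. X \<subseteq> V \<longrightarrow> Y \<subseteq> V \<longrightarrow> f (X \<union> Y) + f (X \<inter> Y) \<le> f X + f Y)"

definition adj :: "nat set set \<Rightarrow> (nat \<times> nat) set" where
  "adj E = {(u, v). {u, v} \<in> E}"

definition is_tree :: "nat set \<Rightarrow> nat set set \<Rightarrow> bool" where
  "is_tree N E \<longleftrightarrow>
     finite N \<and> N \<noteq> {} \<and>
     (\<forall>e\<in>E. \<exists>u v. e = {u, v} \<and> u \<noteq> v \<and> u \<in> N \<and> v \<in> N) \<and>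
     (\<forall>u\<in>N. \<forall>v\<in>N. (u, v) \<in> (adj E)\<^sup>*) \<and>
     (\<forall>u v. {u, v} \<in> E \<longrightarrow> (u, v) \<notin> (adj (E - {{u, v}}))\<^sup>*)"

definition degree :: "nat set set \<Rightarrow> nat \<Rightarrow> nat" where
  "degree E v = card {e \<in> E. v \<in> e}"

definition leaves :: "nat set \<Rightarrow> nat set set \<Rightarrow> nat set" where
  "leaves N E = {v \<in> N. degree E v = 1}"

definition branch_decomposition :: "'a set \<Rightarrow> nat set \<Rightarrow> nat set set \<Rightarrow> ('a \<Rightarrow> nat) \<Rightarrow> bool" where
  "branch_decomposition V N E L \<longleftrightarrow>
     is_tree N E \<and> (\<forall>v\<in>N. degree E v = 1 \<or> degree E v = 3) \<and> bij_betw L V (leaves N E)"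

definition edge_side :: "'a set \<Rightarrow> nat set set \<Rightarrow> ('a \<Rightarrow> nat) \<Rightarrow> nat \<Rightarrow> nat \<Rightarrow> 'a set" where
  "edge_side V E L u v = {x \<in> V. (u, L x) \<in> (adj (E - {{u, v}}))\<^sup>*}"

definition bd_width :: "'a set \<Rightarrow> ('a set \<Rightarrow> nat) \<Rightarrow> nat set set \<Rightarrow> ('a \<Rightarrow> nat) \<Rightarrow> nat" where
  "bd_width V f E L = Max ({f (edge_side V E L u v) | u v. {u, v} \<in> E} \<union> {0})"

text \<open>Branchwidth; by convention 0 when |V| < 2 (no branch decomposition exists then).\<close>
definition bw :: "'a set \<Rightarrow> ('a set \<Rightarrow> nat) \<Rightarrow> nat" where
  "bw V f = (if 2 \<le> card V
             then (LEAST k. \<exists>N E L. branch_decomposition V N E L \<and> bd_width V f E L = k)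
             else 0)"

end

theory Submission
  imports Defs
begin

lemma adj_sym: "sym (adj F)"
  by (auto simp: sym_def adj_def insert_commute)

lemma rt_sym: "(x,y) \<in> (adj F)\<^sup>* \<Longrightarrow> (y,x) \<in> (adj F)\<^sup>*"
  using sym_rtrancl[OF adj_sym] by (auto simp: sym_def)

lemma adj_mono: "F \<subseteq> G \<Longrightarrow> (adj F)\<^sup>* \<subseteq> (adj G)\<^sup>*"
  by (rule rtrancl_mono) (auto simp: adj_def)

lemma avoid:
  assumes "(a,z) \<in> (adj F)\<^sup>*" "(a,u) \<notin> (adj F)\<^sup>*" "u \<in> e"
  shows "(a,z) \<in> (adj (F - {e}))\<^sup>*"
  using assms(1)
proof (induction rule: rtrancl_induct)
  case base then show ?case by simp
next
  case (step y z)
  have "{y,z} \<noteq> e"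
  proof
    assume "{y,z} = e"
    then have "u = y \<or> u = z" using assms(3) by auto
    then show False using step.hyps assms(2) by (auto intro: rtrancl_into_rtrancl)
  qed
  then have "(y,z) \<in> adj (F - {e})" using step.hyps(2) by (simp add: adj_def)
  then show ?case by (rule rtrancl_into_rtrancl[OF step.IH])
qed

lemma ext_step:
  assumes "(p,y) \<in> (adj (E - {{s,t}}))\<^sup>*" "{y,z} \<in> E"
  shows "z = s \<or> z = t \<or> (p,z) \<in> (adj (E - {{s,t}}))\<^sup>*"
proof (cases "{y,z} = {s,t}")
  case True then show ?thesis by (auto simp: doubleton_eq_iff)
next
  case False
  then have "(y,z) \<in> adj (E - {{s,t}})" using assms(2) by (simp add: adj_def)
  then show ?thesis using assms(1) by (meson rtrancl_into_rtrancl)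
qed

lemma tree_edge: "is_tree N E \<Longrightarrow> {u,v} \<in> E \<Longrightarrow> u \<in> N \<and> v \<in> N \<and> u \<noteq> v"
  unfolding is_tree_def by (metis doubleton_eq_iff)

lemma tree_bridge: "is_tree N E \<Longrightarrow> {u,v} \<in> E \<Longrightarrow> (u,v) \<notin> (adj (E - {{u,v}}))\<^sup>*"
  unfolding is_tree_def by blast

lemma tree_conn: "is_tree N E \<Longrightarrow> u \<in> N \<Longrightarrow> z \<in> N \<Longrightarrow> (u,z) \<in> (adj E)\<^sup>*"
  unfolding is_tree_def by blast

lemma reach_N:
  assumes "is_tree N E" "(p,z) \<in> (adj F)\<^sup>*" "F \<subseteq> E" "p \<in> N"
  shows "z \<in> N"
  using assms(2)
proof (induction rule: rtrancl_induct)
  case base then show ?case using assms by simp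
next
  case (step y z)
  then have "{y,z} \<in> E" using assms(3) by (auto simp: adj_def)
  then show ?case using tree_edge[OF assms(1)] by blast
qed

lemma cover:
  assumes "{u,v} \<in> E" "(u,z) \<in> (adj E)\<^sup>*"
  shows "(u,z) \<in> (adj (E - {{u,v}}))\<^sup>* \<or> (v,z) \<in> (adj (E - {{u,v}}))\<^sup>*"
  using assms(2)
proof (induction rule: rtrancl_induct)
  case base then show ?case by simp
next
  case (step y z)
  have yz: "{y,z} \<in> E" using step.hyps(2) by (simp add: adj_def)
  from step.IH show ?case
  proof
    assume "(u, y) \<in> (adj (E - {{u, v}}))\<^sup>*"
    from ext_step[OF this yz] show ?thesis by auto
  next
    assume "(v, y) \<in> (adj (E - {{u, v}}))\<^sup>*"
    from ext_step[OF this yz] show ?thesis by auto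
  qed
qed

lemma two_sides_excl:
  assumes "is_tree N E" "{u,v} \<in> E" "(u,z) \<in> (adj (E - {{u,v}}))\<^sup>*" "(v,z) \<in> (adj (E - {{u,v}}))\<^sup>*"
  shows False
  using tree_bridge[OF assms(1,2)] assms(3) rt_sym[OF assms(4)] by (meson rtrancl_trans)

lemma leaf_in_N: "bij_betw L V (leaves N E) \<Longrightarrow> x \<in> V \<Longrightarrow> L x \<in> N"
  by (auto simp: bij_betw_def leaves_def)

lemma side_compl:
  assumes "is_tree N E" "bij_betw L V (leaves N E)" "{u,v} \<in> E"
  shows "edge_side V E L v u = V - edge_side V E L u v"
proof -
  have e: "{v,u} = {u,v}" by (rule insert_commute)
  have "x \<in> edge_side V E L v u \<longleftrightarrow> x \<notin> edge_side V E L u v" if "x \<in> V" for x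
  proof -
    have "u \<in> N" using tree_edge[OF assms(1,3)] by blast
    moreover have "L x \<in> N" using leaf_in_N[OF assms(2) that] .
    ultimately have "(u, L x) \<in> (adj E)\<^sup>*" using tree_conn[OF assms(1)] by blast
    then show ?thesis using cover[OF assms(3)] two_sides_excl[OF assms(1,3)]
      unfolding edge_side_def e using that by auto
  qed
  then show ?thesis unfolding edge_side_def by auto
qed

lemma leaf_side:
  assumes "is_tree N E" "bij_betw L V (leaves N E)" "x \<in> V" "{L x, v} \<in> E"
  shows "edge_side V E L (L x) v = {x}"
proof -
  have "L x \<in> leaves N E" using bij_betw_apply[OF assms(2,3)] .
  then have "degree E (L x) = 1" by (simp add: leaves_def)
  then have "card {e' \<in> E. L x \<in> e'} = 1" unfolding degree_def .
  then obtain e where "{e' \<in> E. L x \<in> e'} = {e}" by (rule card_1_singletonE)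
  moreover have "{L x, v} \<in> {e' \<in> E. L x \<in> e'}" using assms(4) by simp
  ultimately have one: "{e' \<in> E. L x \<in> e'} = {{L x, v}}" by (metis singletonD)
  have "z = L x" if "(L x, z) \<in> (adj (E - {{L x, v}}))\<^sup>*" for z
    using that
  proof (cases rule: converse_rtranclE)
    case (step y)
    then have "{L x, y} \<in> E - {{L x, v}}" by (simp add: adj_def)
    then have "{L x, y} \<in> {e' \<in> E. L x \<in> e'} - {{L x, v}}" by simp
    then show ?thesis unfolding one by simp
  qed simp
  moreover have inj: "inj_on L V" using assms(2) by (simp add: bij_betw_def)
  ultimately have "y = x" if "y \<in> V" "(L x, L y) \<in> (adj (E - {{L x, v}}))\<^sup>*" for y
    using that assms(3) by (metis inj_onD)
  then show ?thesis using assms(3) unfolding edge_side_def by blast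
qed

lemma deg3:
  assumes "is_tree N E" "degree E u = 3" "{u,v} \<in> E"
  shows "\<exists>a b. {u,a} \<in> E \<and> {u,b} \<in> E \<and> {u,a} \<noteq> {u,v} \<and> {u,b} \<noteq> {u,v} \<and> {u,a} \<noteq> {u,b} \<and>
    (\<forall>e\<in>E. u \<in> e \<longrightarrow> e = {u,v} \<or> e = {u,a} \<or> e = {u,b})"
proof -
  let ?A = "{e \<in> E. u \<in> e}"
  have c3: "card ?A = 3" using assms(2) by (simp add: degree_def)
  have uv: "{u,v} \<in> ?A" using assms(3) by simp
  have "card (?A - {{u,v}}) = 2" using card_Diff_singleton[OF uv] c3 by simp
  then obtain e1 e2 where A: "?A - {{u,v}} = {e1,e2}" "e1 \<noteq> e2" by (meson card_2_iff)
  have mem: "e \<in> E \<and> u \<in> e \<and> e \<noteq> {u,v} \<longleftrightarrow> e = e1 \<or> e = e2" for e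
  proof -
    have "e \<in> ?A - {{u,v}} \<longleftrightarrow> e \<in> {e1,e2}" using A(1) by (rule arg_cong)
    then show ?thesis by simp
  qed
  have ed: "\<forall>e\<in>E. \<exists>p q. e = {p,q} \<and> p \<noteq> q \<and> p \<in> N \<and> q \<in> N"
    using assms(1) unfolding is_tree_def by blast
  have form: "\<exists>a. e = {u,a}" if "e \<in> E" "u \<in> e" for e
  proof -
    from ed that(1) obtain p q where pq: "e = {p,q}" by blast
    show ?thesis
    proof (cases "u = p")
      case True then show ?thesis using pq by blast
    next
      case False then have "u = q" using pq that(2) by blast
      then show ?thesis using pq insert_commute by metis
    qed
  qed
  have e1: "e1 \<in> E" "u \<in> e1" "e1 \<noteq> {u,v}" using mem[of e1] by simp_all
  have e2: "e2 \<in> E" "u \<in> e2" "e2 \<noteq> {u,v}" using mem[of e2] by simp_all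
  obtain a where a: "e1 = {u,a}" using form[OF e1(1,2)] by blast
  obtain b where b: "e2 = {u,b}" using form[OF e2(1,2)] by blast
  have f1: "{u,a} \<in> E" "{u,b} \<in> E" "{u,a} \<noteq> {u,v}" "{u,b} \<noteq> {u,v}" "{u,a} \<noteq> {u,b}"
    using e1 e2 a b A(2) by simp_all
  have f2: "\<forall>e\<in>E. u \<in> e \<longrightarrow> e = {u,v} \<or> e = {u,a} \<or> e = {u,b}"
  proof (intro ballI impI)
    fix e assume "e \<in> E" "u \<in> e"
    then show "e = {u,v} \<or> e = {u,a} \<or> e = {u,b}" using mem[of e] a b by blast
  qed
  show ?thesis by (rule exI[of _ a], rule exI[of _ b]) (use f1 f2 in simp)
qed

lemma cover3:
  assumes "\<And>e. e \<in> E \<Longrightarrow> u \<in> e \<Longrightarrow> e = {u,v} \<or> e = {u,a} \<or> e = {u,b}"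
    "(u,z) \<in> (adj E)\<^sup>*"
  shows "z = u \<or> (v,z) \<in> (adj (E - {{v,u}}))\<^sup>* \<or> (a,z) \<in> (adj (E - {{a,u}}))\<^sup>* \<or> (b,z) \<in> (adj (E - {{b,u}}))\<^sup>*"
  using assms(2)
proof (induction rule: rtrancl_induct)
  case base thus ?case by simp
next
  case (step y z)
  have yz: "{y,z} \<in> E" using step.hyps(2) by (simp add: adj_def)
  from step.IH show ?case
  proof (elim disjE)
    assume "y = u"
    then have "{u,z} = {u,v} \<or> {u,z} = {u,a} \<or> {u,z} = {u,b}" using assms(1) yz by auto
    then show ?case by (auto simp: doubleton_eq_iff)
  next
    assume h: "(v,y) \<in> (adj (E - {{v,u}}))\<^sup>*"
    from ext_step[OF h yz] show ?case by auto
  next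
    assume h: "(a,y) \<in> (adj (E - {{a,u}}))\<^sup>*"
    from ext_step[OF h yz] show ?case by auto
  next
    assume h: "(b,y) \<in> (adj (E - {{b,u}}))\<^sup>*"
    from ext_step[OF h yz] show ?case by auto
  qed
qed

lemma sub_comp:
  assumes "is_tree N E" "{u,a} \<in> E" "{u,a} \<noteq> {u,v}" "(a,z) \<in> (adj (E - {{a,u}}))\<^sup>*"
  shows "(u,z) \<in> (adj (E - {{u,v}}))\<^sup>*"
proof -
  have au: "{a,u} \<in> E" using assms(2) by (simp add: insert_commute)
  have nb: "(a,u) \<notin> (adj (E - {{a,u}}))\<^sup>*" using tree_bridge[OF assms(1) au] .
  have "(a,z) \<in> (adj (E - {{a,u}} - {{u,v}}))\<^sup>*" using avoid[OF assms(4) nb] by simp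
  moreover have "E - {{a,u}} - {{u,v}} \<subseteq> E - {{u,v}}" by auto
  ultimately have "(a,z) \<in> (adj (E - {{u,v}}))\<^sup>*" using adj_mono by blast
  moreover have "(u,a) \<in> adj (E - {{u,v}})" using assms(2,3) by (simp add: adj_def)
  ultimately show ?thesis by (meson converse_rtrancl_into_rtrancl)
qed


lemma cf_sub:
  assumes "connectivity_function V f" "X \<subseteq> V" "Y \<subseteq> V"
  shows "f (X \<union> Y) \<le> f X + f Y"
proof -
  have h: "\<forall>X Y. X \<subseteq> V \<longrightarrow> Y \<subseteq> V \<longrightarrow> f (X \<union> Y) + f (X \<inter> Y) \<le> f X + f Y" using assms(1) unfolding connectivity_function_def by blast
  have "f (X \<union> Y) + f (X \<inter> Y) \<le> f X + f Y" using h assms(2,3) by blast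
  then show ?thesis by linarith
qed

lemma cf_sm: "connectivity_function V f \<Longrightarrow> \<forall>X Y. X \<subseteq> V \<longrightarrow> Y \<subseteq> V \<longrightarrow> f (X \<union> Y) + f (X \<inter> Y) \<le> f X + f Y"
  unfolding connectivity_function_def by blast

lemma cf_compl:
  assumes "connectivity_function V f" "X \<subseteq> V"
  shows "f (V - X) = f X"
proof -
  have h: "\<forall>X. X \<subseteq> V \<longrightarrow> f X = f (V - X)" using assms(1) unfolding connectivity_function_def by blast
  show ?thesis by (rule sym, rule h[rule_format, OF assms(2)])
qed

lemma cf_compl':
  assumes "connectivity_function V f" "X \<subseteq> V" "V - X = Y"
  shows "f Y = f X"
  using cf_compl[OF assms(1,2)] assms(3) by simp

lemma good_side:
  assumes cf: "connectivity_function V f" and AV: "A \<subseteq> V" and WV: "W \<subseteq> V" and lt: "2 * f A < f W"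
  shows "(f (A \<inter> W) < f W \<and> f (A \<inter> (V - W)) < f W) \<or>
         (f ((V-A) \<inter> W) < f W \<and> f ((V-A) \<inter> (V - W)) < f W)"
proof -
  have cA: "f (V - A) = f A" using cf_compl[OF cf AV] .
  have i: "f (A \<inter> W) + f ((V-A) \<inter> (V-W)) \<le> f A + f W"
  proof -
    have "f (A \<union> W) + f (A \<inter> W) \<le> f A + f W" using cf_sm[OF cf] AV WV by blast
    moreover have "f ((V-A) \<inter> (V-W)) = f (A \<union> W)" by (rule cf_compl'[OF cf]) (use AV WV in auto)
    ultimately show ?thesis by linarith
  qed
  have ii: "f ((V-A) \<inter> W) + f (A \<inter> (V-W)) \<le> f A + f W"
  proof -
    have "f ((V-A) \<union> W) + f ((V-A) \<inter> W) \<le> f (V-A) + f W" using cf_sm[OF cf] AV WV by blast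
    moreover have "f (A \<inter> (V-W)) = f ((V-A) \<union> W)" by (rule cf_compl'[OF cf]) (use AV WV in auto)
    ultimately show ?thesis using cA by linarith
  qed
  have iii: "f (A \<inter> W) \<le> f A + f (A \<inter> (V-W))"
  proof -
    have "f (A \<inter> W) = f ((V-A) \<union> (A \<inter> (V-W)))" by (rule cf_compl'[OF cf]) (use AV WV in auto)
    also have "\<dots> \<le> f (V-A) + f (A \<inter> (V-W))" by (rule cf_sub[OF cf]) auto
    finally show ?thesis using cA by linarith
  qed
  have iv: "f (A \<inter> (V-W)) \<le> f A + f (A \<inter> W)"
  proof -
    have "f (A \<inter> (V-W)) = f ((V-A) \<union> (A \<inter> W))" by (rule cf_compl'[OF cf]) (use AV WV in auto)
    also have "\<dots> \<le> f (V-A) + f (A \<inter> W)" by (rule cf_sub[OF cf]) (use AV in auto)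
    finally show ?thesis using cA by linarith
  qed
  have v: "f ((V-A) \<inter> W) \<le> f A + f ((V-A) \<inter> (V-W))"
  proof -
    have "f ((V-A) \<inter> W) = f (A \<union> ((V-A) \<inter> (V-W)))" by (rule cf_compl'[OF cf]) (use AV WV in auto)
    also have "\<dots> \<le> f A + f ((V-A) \<inter> (V-W))" by (rule cf_sub[OF cf]) (use AV in auto)
    finally show ?thesis .
  qed
  have vi: "f ((V-A) \<inter> (V-W)) \<le> f A + f ((V-A) \<inter> W)"
  proof -
    have "f ((V-A) \<inter> (V-W)) = f (A \<union> ((V-A) \<inter> W))" by (rule cf_compl'[OF cf]) (use AV WV in auto)
    also have "\<dots> \<le> f A + f ((V-A) \<inter> W)" by (rule cf_sub[OF cf]) (use AV WV in auto)
    finally show ?thesis .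
  qed
  show ?thesis using i ii iii iv v vi lt by linarith
qed


definition cP :: "nat \<Rightarrow> nat \<Rightarrow> nat \<Rightarrow> bool" where
  "cP m x y \<longleftrightarrow> even x \<and> ((y = x+2 \<and> x+2 \<le> 2*m) \<or> (y = x+1 \<and> 2 \<le> x \<and> x+2 \<le> 2*m))"

definition cE :: "nat \<Rightarrow> nat set set" where
  "cE m = {{x,y} | x y. cP m x y}"

definition cN :: "nat \<Rightarrow> nat set" where
  "cN m = {x. (even x \<and> x \<le> 2*m) \<or> (odd x \<and> 3 \<le> x \<and> x+1 \<le> 2*m)}"

lemma cP_nodes: "cP m x y \<Longrightarrow> x \<in> cN m \<and> y \<in> cN m \<and> x \<noteq> y"
  unfolding cP_def cN_def by auto

lemma cE_mem: "e \<in> cE m \<longleftrightarrow> (\<exists>x y. e = {x,y} \<and> cP m x y)"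
  unfolding cE_def by blast

lemma cut:
  assumes "(u,z) \<in> (adj F)\<^sup>*" "u \<in> S" "\<And>x y. {x,y} \<in> F \<Longrightarrow> x \<in> S \<Longrightarrow> y \<in> S"
  shows "z \<in> S"
  using assms(1)
proof (induction rule: rtrancl_induct)
  case base then show ?case using assms(2) by simp
next
  case (step y z) then show ?case using assms(3) by (auto simp: adj_def)
qed

lemma cP_cases: "cP m x y \<Longrightarrow> even x \<and> (y = x+2 \<or> y = x+1)"
  unfolding cP_def by auto

lemma bridge1:
  assumes "cP m x y"
  shows "(x,y) \<notin> (adj (cE m - {{x,y}}))\<^sup>*"
proof
  assume r: "(x,y) \<in> (adj (cE m - {{x,y}}))\<^sup>*"
  have ex: "even x" using assms by (simp add: cP_def)
  show False
  proof (cases "y = x+2")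
    case True
    have cl: "q \<le> x+1" if "{p,q} \<in> cE m - {{x,y}}" "p \<le> x+1" for p q
    proof -
      have "{p,q} \<in> cE m" using that(1) by simp
      from this[unfolded cE_mem] obtain x' y' where e: "{p,q} = {x',y'}" "cP m x' y'" by (elim exE conjE)
      have ne: "{x',y'} \<noteq> {x,y}" using that(1) e(1) by (metis DiffD2 singletonI)
      have ex': "even x'" "y' = x'+2 \<or> y' = x'+1" using cP_cases[OF e(2)] by auto
      from e(1) have "(p = x' \<and> q = y') \<or> (p = y' \<and> q = x')" by (simp add: doubleton_eq_iff)
      then show ?thesis
      proof
        assume pq: "p = x' \<and> q = y'"
        show ?thesis
        proof (rule ccontr)
          assume "\<not> q \<le> x+1"
          then have "x' = x \<and> y' = y"
            using pq that(2) ex ex' True by presburger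
          then show False using ne by simp
        qed
      next
        assume "p = y' \<and> q = x'" then show ?thesis using ex'(2) that(2) by auto
      qed
    qed
    have "y \<in> {z. z \<le> x+1}" by (rule cut[OF r]) (use cl in auto)
    then show False using True by simp
  next
    case False
    then have yx: "y = x+1" using cP_cases[OF assms] by simp
    have cl: "q \<noteq> x+1" if "{p,q} \<in> cE m - {{x,y}}" "p \<noteq> x+1" for p q
    proof
      assume q: "q = x+1"
      have "{p,q} \<in> cE m" using that(1) by simp
      from this[unfolded cE_mem] obtain x' y' where e: "{p,q} = {x',y'}" "cP m x' y'" by (elim exE conjE)
      have ne: "{x',y'} \<noteq> {x,y}" using that(1) e(1) by (metis DiffD2 singletonI)
      have ex': "even x'" "y' = x'+2 \<or> y' = x'+1" using cP_cases[OF e(2)] by auto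
      from e(1) have "(p = x' \<and> q = y') \<or> (p = y' \<and> q = x')" by (simp add: doubleton_eq_iff)
      then show False
      proof
        assume pq: "p = x' \<and> q = y'"
        then have "x' = x" using q ex ex' by presburger
        then show False using ne pq q yx by simp
      next
        assume "p = y' \<and> q = x'" then show False using ex' ex q by presburger
      qed
    qed
    have "y \<in> {z. z \<noteq> x+1}" by (rule cut[OF r]) (use cl in auto)
    then show False using yx by simp
  qed
qed

lemma inc_eq: "{e \<in> cE m. v \<in> e} = (\<lambda>y. {v,y}) ` {y. cP m v y \<or> cP m y v}"
proof (rule set_eqI, rule iffI)
  fix e assume "e \<in> {e \<in> cE m. v \<in> e}"
  then have e: "e \<in> cE m" "v \<in> e" by auto
  from e(1)[unfolded cE_mem] obtain x y where xy: "e = {x,y}" "cP m x y" by (elim exE conjE)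
  show "e \<in> (\<lambda>y. {v,y}) ` {y. cP m v y \<or> cP m y v}"
  proof (cases "v = x")
    case True
    then have "y \<in> {y. cP m v y \<or> cP m y v}" using xy(2) by simp
    moreover have "e = {v,y}" using xy(1) True by simp
    ultimately show ?thesis by (rule rev_image_eqI)
  next
    case False then have vy: "v = y" using xy e(2) by blast
    then have "e = {v,x}" using xy by (simp add: insert_commute)
    moreover have "x \<in> {y. cP m v y \<or> cP m y v}" using xy(2) vy by simp
    ultimately show ?thesis by (rule rev_image_eqI[rotated])
  qed
next
  fix e assume "e \<in> (\<lambda>y. {v,y}) ` {y. cP m v y \<or> cP m y v}"
  then obtain y where y: "e = {v,y}" "cP m v y \<or> cP m y v" by blast
  then have "e \<in> cE m" unfolding cE_mem
  proof (elim disjE)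
    assume "cP m v y" then show "\<exists>a b. e = {a, b} \<and> cP m a b" using y(1) by blast
  next
    assume "cP m y v" then show "\<exists>a b. e = {a, b} \<and> cP m a b" using y(1) insert_commute by blast
  qed
  then show "e \<in> {e \<in> cE m. v \<in> e}" using y by simp
qed

lemma deg_eq: "degree (cE m) v = card {y. cP m v y \<or> cP m y v}"
proof -
  have "inj_on (\<lambda>y. {v,y}) {y. cP m v y \<or> cP m y v}"
  proof (rule inj_onI)
    fix y y' assume a: "y \<in> {y. cP m v y \<or> cP m y v}" "y' \<in> {y. cP m v y \<or> cP m y v}" "{v,y} = {v,y'}"
    have "y \<noteq> v"
    proof
      assume "y = v" then have "cP m v v" using a(1) by simp
      then show False using cP_nodes by blast
    qed
    then show "y = y'" using a(3) by (simp add: doubleton_eq_iff)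
  qed
  then show ?thesis unfolding degree_def inc_eq by (rule card_image)
qed

lemma nb0: "1 \<le> m \<Longrightarrow> {y. cP m 0 y \<or> cP m y 0} = {2}"
  unfolding cP_def by auto

lemma nbtop': "1 \<le> m \<Longrightarrow> (cP m (2*m) y \<or> cP m y (2*m)) \<longleftrightarrow> y = 2*m-2"
  unfolding cP_def by presburger
lemma nbodd': "odd v \<Longrightarrow> 3 \<le> v \<Longrightarrow> v+1 \<le> 2*m \<Longrightarrow> (cP m v y \<or> cP m y v) \<longleftrightarrow> y = v-1"
  unfolding cP_def by presburger
lemma nbmid': "even v \<Longrightarrow> 0 < v \<Longrightarrow> v < 2*m \<Longrightarrow> (cP m v y \<or> cP m y v) \<longleftrightarrow> (y = v+2 \<or> y = v+1 \<or> y = v-2)"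
  unfolding cP_def by presburger

lemma deg_val:
  assumes "1 \<le> m" "v \<in> cN m"
  shows "degree (cE m) v = (if v = 0 \<or> v = 2*m \<or> odd v then 1 else 3)"
proof -
  consider "v = 0" | "v = 2*m" | "odd v" | "even v \<and> 0 < v \<and> v < 2*m"
    using assms(2) unfolding cN_def by fastforce
  then show ?thesis
  proof cases
    case 1 then show ?thesis using nb0[OF assms(1)] deg_eq by simp
  next
    case 2
    have "{y. cP m v y \<or> cP m y v} = {2*m-2}" using nbtop'[OF assms(1)] 2 by auto
    then show ?thesis using 2 deg_eq by simp
  next
    case 3
    have "3 \<le> v" "v+1 \<le> 2*m" using 3 assms(2) unfolding cN_def by auto
    then have "{y. cP m v y \<or> cP m y v} = {v-1}" using nbodd'[OF 3] by auto
    then show ?thesis using 3 deg_eq by simp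
  next
    case 4
    then have "{y. cP m v y \<or> cP m y v} = {v+2, v+1, v-2}" using nbmid' by auto
    moreover have "card {v+2, v+1, v-2} = 3" using 4 by auto
    ultimately show ?thesis using 4 deg_eq by auto
  qed
qed

lemma reach_even: "2*i \<le> 2*m \<Longrightarrow> (0, 2*i) \<in> (adj (cE m))\<^sup>*"
proof (induction i)
  case 0 then show ?case by simp
next
  case (Suc i)
  have "cP m (2*i) (2*i+2)" using Suc.prems unfolding cP_def by simp
  then have "{2*i, 2*i+2} \<in> cE m" unfolding cE_mem by blast
  then have "(2*i, 2*Suc i) \<in> adj (cE m)" by (simp add: adj_def)
  moreover have "(0, 2*i) \<in> (adj (cE m))\<^sup>*" using Suc by simp
  ultimately show ?case by (rule rtrancl_into_rtrancl[rotated])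
qed

lemma reach0: "v \<in> cN m \<Longrightarrow> (0, v) \<in> (adj (cE m))\<^sup>*"
proof -
  assume v: "v \<in> cN m"
  show ?thesis
  proof (cases "even v")
    case True
    then obtain i where "v = 2*i" by blast
    moreover have "v \<le> 2*m" using v True unfolding cN_def by auto
    ultimately show ?thesis using reach_even by simp
  next
    case False
    then have o: "3 \<le> v" "v+1 \<le> 2*m" using v unfolding cN_def by auto
    obtain i where i: "v = 2*i+1" using False by (metis oddE)
    have "cP m (2*i) v" using o i unfolding cP_def by simp
    then have "{2*i, v} \<in> cE m" unfolding cE_mem by blast
    then have "(2*i, v) \<in> adj (cE m)" by (simp add: adj_def)
    moreover have "(0, 2*i) \<in> (adj (cE m))\<^sup>*" using reach_even o i by simp
    ultimately show ?thesis by (rule rtrancl_into_rtrancl[rotated])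
  qed
qed

lemma c_tree: "1 \<le> m \<Longrightarrow> is_tree (cN m) (cE m)"
  unfolding is_tree_def
proof (intro conjI ballI allI impI)
  show "finite (cN m)" by (rule finite_subset[of _ "{..2*m}"]) (auto simp: cN_def)
  show "cN m \<noteq> {}" unfolding cN_def by auto
next
  fix e assume "e \<in> cE m"
  then obtain x y where "e = {x,y}" "cP m x y" unfolding cE_mem by blast
  then show "\<exists>u v. e = {u, v} \<and> u \<noteq> v \<and> u \<in> cN m \<and> v \<in> cN m" using cP_nodes by blast
next
  fix u v assume "u \<in> cN m" "v \<in> cN m"
  then have "(0,u) \<in> (adj (cE m))\<^sup>*" "(0,v) \<in> (adj (cE m))\<^sup>*" using reach0 by auto
  then show "(u,v) \<in> (adj (cE m))\<^sup>*" using rt_sym rtrancl_trans by metis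
next
  fix u v assume uv: "{u,v} \<in> cE m"
  then obtain x y where xy: "{u,v} = {x,y}" "cP m x y" unfolding cE_mem by blast
  have b: "(x,y) \<notin> (adj (cE m - {{x,y}}))\<^sup>*" by (rule bridge1[OF xy(2)])
  from xy(1) have "(u = x \<and> v = y) \<or> (u = y \<and> v = x)" by (simp add: doubleton_eq_iff)
  then show "(u,v) \<notin> (adj (cE m - {{u,v}}))\<^sup>*"
  proof
    assume "u = x \<and> v = y" then show ?thesis using b by simp
  next
    assume "u = y \<and> v = x" then show ?thesis using b xy(1) rt_sym by metis
  qed
qed

lemma leaves_eq:
  assumes "1 \<le> m"
  shows "leaves (cN m) (cE m) = {v. v = 0 \<or> v = 2*m \<or> (odd v \<and> 3 \<le> v \<and> v+1 \<le> 2*m)}"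
proof (rule set_eqI)
  fix v
  show "v \<in> leaves (cN m) (cE m) \<longleftrightarrow> v \<in> {v. v = 0 \<or> v = 2*m \<or> (odd v \<and> 3 \<le> v \<and> v+1 \<le> 2*m)}"
  proof (cases "v \<in> cN m")
    case True
    then show ?thesis using deg_val[OF assms True] unfolding leaves_def cN_def by auto
  next
    case False
    then show ?thesis unfolding leaves_def cN_def by auto
  qed
qed

definition hh :: "nat \<Rightarrow> nat \<Rightarrow> nat" where
  "hh m j = (if j = 0 \<or> j = m then 2*j else 2*j+1)"

lemma hh_bij:
  assumes "1 \<le> m"
  shows "bij_betw (hh m) {0..<m+1} {v. v = 0 \<or> v = 2*m \<or> (odd v \<and> 3 \<le> v \<and> v+1 \<le> 2*m)}"
  unfolding bij_betw_def
proof (intro conjI)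
  show "inj_on (hh m) {0..<m+1}"
  proof (rule inj_onI)
    fix j j' assume "j \<in> {0..<m+1}" "j' \<in> {0..<m+1}" "hh m j = hh m j'"
    then show "j = j'" unfolding hh_def by (auto split: if_splits)
  qed
  show "hh m ` {0..<m+1} = {v. v = 0 \<or> v = 2*m \<or> (odd v \<and> 3 \<le> v \<and> v+1 \<le> 2*m)}"
  proof (rule set_eqI, rule iffI)
    fix v assume "v \<in> hh m ` {0..<m+1}"
    then obtain j where "j < m+1" "v = hh m j" by auto
    then show "v \<in> {v. v = 0 \<or> v = 2*m \<or> (odd v \<and> 3 \<le> v \<and> v+1 \<le> 2*m)}"
      unfolding hh_def by auto
  next
    fix v assume v: "v \<in> {v. v = 0 \<or> v = 2*m \<or> (odd v \<and> 3 \<le> v \<and> v+1 \<le> 2*m)}"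
    show "v \<in> hh m ` {0..<m+1}"
    proof (cases "v = 0 \<or> v = 2*m")
      case True
      then have "v = hh m (v div 2)" "v div 2 \<in> {0..<m+1}" unfolding hh_def by auto
      then show ?thesis by blast
    next
      case False
      then have o: "odd v" "3 \<le> v" "v+1 \<le> 2*m" using v by auto
      then have "v div 2 \<noteq> 0" "v div 2 \<noteq> m" "v div 2 < m+1" by presburger+
      then have "hh m (v div 2) = v" "v div 2 \<in> {0..<m+1}" unfolding hh_def using o(1) by auto
      then show ?thesis by (metis image_eqI)
    qed
  qed
qed

lemma exists_bd:
  assumes "finite V" "2 \<le> card V"
  shows "\<exists>N E L. branch_decomposition V N E L"
proof -
  define m where "m = card V - 1"
  have m1: "1 \<le> m" and cm: "card V = m+1" using assms(2) unfolding m_def by auto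
  obtain g where g: "bij_betw g V {0..<card V}" using ex_bij_betw_finite_nat[OF assms(1)] by blast
  have "bij_betw (hh m \<circ> g) V (leaves (cN m) (cE m))"
    unfolding leaves_eq[OF m1] using bij_betw_trans[OF g] hh_bij[OF m1] cm by simp
  moreover have "\<forall>v\<in>cN m. degree (cE m) v = 1 \<or> degree (cE m) v = 3" using deg_val[OF m1] by simp
  ultimately show ?thesis unfolding branch_decomposition_def using c_tree[OF m1] by blast
qed


lemma width_bound:
  assumes "is_tree N E" "{u,v} \<in> E"
  shows "f (edge_side V E L u v) \<le> bd_width V f E L"
proof -
  have "{f (edge_side V E L u v) | u v. {u,v} \<in> E} \<subseteq> (\<lambda>(u,v). f (edge_side V E L u v)) ` (N \<times> N)"
  proof
    fix t assume "t \<in> {f (edge_side V E L u v) | u v. {u,v} \<in> E}"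
    then obtain p q where "t = f (edge_side V E L p q)" "{p,q} \<in> E" by blast
    moreover then have "p \<in> N" "q \<in> N" using tree_edge[OF assms(1)] by blast+
    ultimately show "t \<in> (\<lambda>(u,v). f (edge_side V E L u v)) ` (N \<times> N)" by force
  qed
  moreover have "finite N" using assms(1) unfolding is_tree_def by blast
  ultimately have fin: "finite ({f (edge_side V E L u v) | u v. {u,v} \<in> E} \<union> {0})"
    by (meson finite_Un finite_SigmaI finite_imageI finite_insert finite.emptyI finite_subset)
  have "f (edge_side V E L u v) \<in> {f (edge_side V E L u v) | u v. {u,v} \<in> E} \<union> {0}"
    using assms(2) by blast
  then show ?thesis unfolding bd_width_def using fin by (rule Max_ge[rotated])
qed

lemma tree_form: "is_tree N E \<Longrightarrow> e \<in> E \<Longrightarrow> \<exists>u v. e = {u,v}"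
  unfolding is_tree_def by blast

lemma tree_fin: "is_tree N E \<Longrightarrow> finite N"
  unfolding is_tree_def by blast

lemma side_sub: "edge_side V E L u v \<subseteq> V"
  unfolding edge_side_def by blast

theorem theorem3:
  fixes V :: "'a set" and f :: "'a set \<Rightarrow> nat" and W :: "'a set"
  assumes "finite V"
    and "connectivity_function V f"
    and "W \<subseteq> V"
    and "f W > 2 * bw V f"
  shows "\<exists>C1 C2 C3. C1 \<union> C2 \<union> C3 = V \<and>
           C1 \<inter> C2 = {} \<and> C1 \<inter> C3 = {} \<and> C2 \<inter> C3 = {} \<and>
           (\<forall>C \<in> {C1, C2, C3}.
              2 * f C < f W \<and>
              f (C \<inter> W) < f W \<and>
              f (C \<inter> (V - W)) < f W)"
proof -
  note cf = assms(2)
  have f0: "f {} = 0" using cf unfolding connectivity_function_def by blast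
  show ?thesis
  proof (cases "2 \<le> card V")
    case False
    then have "card V \<le> Suc 0" by simp
    then have one: "\<forall>a\<in>V. \<forall>b\<in>V. a = b" using card_le_Suc0_iff_eq[OF assms(1)] by blast
    have "W = {} \<or> W = V"
    proof (cases "W = {}")
      case False
      then obtain w where "w \<in> W" by blast
      then have "V \<subseteq> W"
      proof -
        assume w: "w \<in> W"
        then have wV: "w \<in> V" using assms(3) by blast
        show "V \<subseteq> W"
        proof
          fix y assume "y \<in> V"
          then have "y = w" using one wV by blast
          then show "y \<in> W" using w by simp
        qed
      qed
      then show ?thesis using assms(3) by blast
    qed simp
    moreover have "f V = 0" using cf_compl[OF cf, of "{}"] f0 by simp
    ultimately have "f W = 0" using f0 by blast
    then show ?thesis using assms(4) by simp
  next
    case True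
    then have bwdef: "bw V f = (LEAST k. \<exists>N E L. branch_decomposition V N E L \<and> bd_width V f E L = k)"
      by (simp add: bw_def)
    obtain N0 E0 L0 where "branch_decomposition V N0 E0 L0" using exists_bd[OF assms(1) True] by blast
    then have "\<exists>N E L. branch_decomposition V N E L \<and> bd_width V f E L = bd_width V f E0 L0" by blast
    then have "\<exists>N E L. branch_decomposition V N E L \<and> bd_width V f E L = bw V f"
      unfolding bwdef by (rule LeastI)
    then obtain N E L where bd: "branch_decomposition V N E L" and bdw: "bd_width V f E L = bw V f"
      by blast
    have tr: "is_tree N E" and dg: "\<forall>v\<in>N. degree E v = 1 \<or> degree E v = 3"
      and bj: "bij_betw L V (leaves N E)" using bd unfolding branch_decomposition_def by auto
    define k where "k = bw V f"
    have kw: "2 * k < f W" using assms(4) k_def by simp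
    have wb: "f (edge_side V E L u v) \<le> k" if "{u,v} \<in> E" for u v
    proof -
      have "f (edge_side V E L u v) \<le> bd_width V f E L" by (rule width_bound[OF tr that])
      then show ?thesis using bdw k_def by simp
    qed
    define good where "good C \<longleftrightarrow> f (C \<inter> W) < f W \<and> f (C \<inter> (V - W)) < f W" for C
    define okc where "okc C \<longleftrightarrow> 2 * f C < f W \<and> f (C \<inter> W) < f W \<and> f (C \<inter> (V - W)) < f W" for C
    have ok_side: "okc (edge_side V E L u v)" if "{u,v} \<in> E" "good (edge_side V E L u v)" for u v
      using wb[OF that(1)] that(2) kw unfolding good_def okc_def by linarith
    have ok_empty: "okc {}" unfolding okc_def using f0 kw by simp
    have excl: "good (edge_side V E L u v) \<or> good (edge_side V E L v u)" if "{u,v} \<in> E" for u v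
    proof -
      have "2 * f (edge_side V E L u v) < f W" using wb[OF that] kw by linarith
      from good_side[OF cf side_sub assms(3) this] show ?thesis
        unfolding good_def side_compl[OF tr bj that] by blast
    qed
    have fin: "\<exists>C1 C2 C3. C1 \<union> C2 \<union> C3 = V \<and> C1 \<inter> C2 = {} \<and> C1 \<inter> C3 = {} \<and> C2 \<inter> C3 = {} \<and>
        okc C1 \<and> okc C2 \<and> okc C3 \<Longrightarrow> ?thesis"
    proof -
      assume "\<exists>C1 C2 C3. C1 \<union> C2 \<union> C3 = V \<and> C1 \<inter> C2 = {} \<and> C1 \<inter> C3 = {} \<and> C2 \<inter> C3 = {} \<and>
        okc C1 \<and> okc C2 \<and> okc C3"
      then obtain C1 C2 C3 where h: "C1 \<union> C2 \<union> C3 = V" "C1 \<inter> C2 = {}" "C1 \<inter> C3 = {}" "C2 \<inter> C3 = {}"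
        "okc C1" "okc C2" "okc C3" by blast
      have "\<forall>C \<in> {C1, C2, C3}. 2 * f C < f W \<and> f (C \<inter> W) < f W \<and> f (C \<inter> (V - W)) < f W"
        using h(5-7) unfolding okc_def by simp
      then show ?thesis using h(1-4) by blast
    qed
    show ?thesis
    proof (cases "\<exists>u v. {u,v} \<in> E \<and> \<not> good (edge_side V E L u v)")
      case False
      have "V \<noteq> {}" using True by (intro notI) simp
      then obtain x where x: "x \<in> V" by blast
      have "L x \<in> leaves N E" using bij_betw_apply[OF bj x] .
      then have "card {e \<in> E. L x \<in> e} = 1" unfolding leaves_def degree_def by simp
      then have "{e \<in> E. L x \<in> e} \<noteq> {}" by (intro notI) simp
      then obtain e where eE: "e \<in> E" by blast
      moreover obtain p q where "e = {p,q}" using tree_form[OF tr eE] by blast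
      ultimately have pq: "{p,q} \<in> E" by simp
      have pq': "{q,p} \<in> E" using pq by (simp add: insert_commute)
      have g1: "good (edge_side V E L p q)" using False pq by blast
      have g2: "good (edge_side V E L q p)" using False pq' by blast
      have c: "edge_side V E L q p = V - edge_side V E L p q" using side_compl[OF tr bj pq] .
      have h1: "edge_side V E L p q \<union> edge_side V E L q p \<union> {} = V" unfolding c using side_sub[of V E L p q] by blast
      have h2: "edge_side V E L p q \<inter> edge_side V E L q p = {}" using c by blast
      have h3: "okc (edge_side V E L p q)" using ok_side[OF pq g1] .
      have h4: "okc (edge_side V E L q p)" using ok_side[OF pq' g2] .
      show ?thesis
        apply (rule fin)
        apply (rule exI[of _ "edge_side V E L p q"], rule exI[of _ "edge_side V E L q p"], rule exI[of _ "{}"])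
        using h1 h2 h3 h4 ok_empty by simp
    next
      case True
      then obtain u0 v0 where uv0: "{u0,v0} \<in> E" "\<not> good (edge_side V E L u0 v0)" by blast
      define comp where "comp u v = {z. (u,z) \<in> (adj (E - {{u,v}}))\<^sup>*}" for u v
      let ?G = ?thesis
      have "\<forall>u v. card (comp u v) = n \<longrightarrow> {u,v} \<in> E \<longrightarrow> \<not> good (edge_side V E L u v) \<longrightarrow> ?G" for n
      proof (induction n rule: less_induct)
        case (less n)
        show ?case
        proof (intro allI impI)
          fix u v assume cn: "card (comp u v) = n" and uv: "{u,v} \<in> E" and bad: "\<not> good (edge_side V E L u v)"
          have uN: "u \<in> N" using tree_edge[OF tr uv] by blast
          show ?G
          proof (cases "degree E u = 1")
            case True
            then have "u \<in> leaves N E" using uN unfolding leaves_def by simp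
            then obtain x where x: "x \<in> V" "u = L x" using bj unfolding bij_betw_def by blast
            have s: "edge_side V E L u v = {x}" using leaf_side[OF tr bj x(1)] uv x(2) by simp
            have "f {x} \<le> k" using wb[OF uv] s by simp
            then have fx: "f {x} < f W" using kw by linarith
            have "f ({x} \<inter> W) < f W" using fx f0 kw by (cases "x \<in> W") simp_all
            moreover have "f ({x} \<inter> (V - W)) < f W" using fx f0 kw x(1) by (cases "x \<in> W") simp_all
            ultimately
            have "good (edge_side V E L u v)" unfolding good_def s by simp
            then show ?G using bad by simp
          next
            case False
            then have d3: "degree E u = 3" using dg uN by blast
            from deg3[OF tr d3 uv] obtain a b where ab: "{u,a} \<in> E" "{u,b} \<in> E" "{u,a} \<noteq> {u,v}" "{u,b} \<noteq> {u,v}" "{u,a} \<noteq> {u,b}"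
              and inc0: "\<forall>e\<in>E. u \<in> e \<longrightarrow> e = {u,v} \<or> e = {u,a} \<or> e = {u,b}"
              by (elim exE conjE)
            have inc: "\<And>e. e \<in> E \<Longrightarrow> u \<in> e \<Longrightarrow> e = {u,v} \<or> e = {u,a} \<or> e = {u,b}"
              using inc0 by blast
            have au: "{a,u} \<in> E" and bu: "{b,u} \<in> E" and vu: "{v,u} \<in> E"
              using ab uv by (simp_all add: insert_commute)
            have finc: "finite (comp u v)"
            proof (rule finite_subset)
              show "comp u v \<subseteq> N"
              proof
                fix z assume "z \<in> comp u v"
                then have "(u,z) \<in> (adj (E - {{u,v}}))\<^sup>*" unfolding comp_def by simp
                then show "z \<in> N" using reach_N[OF tr _ Diff_subset uN] by blast
              qed
              show "finite N" using tree_fin[OF tr] .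
            qed
            have smaller: "card (comp c u) < n" if "{u,c} \<in> E" "{u,c} \<noteq> {u,v}" for c
            proof -
              have cu: "{c,u} \<in> E" using that(1) by (simp add: insert_commute)
              have "comp c u \<subseteq> comp u v" unfolding comp_def using sub_comp[OF tr that] by blast
              moreover have "u \<in> comp u v" unfolding comp_def by simp
              moreover have "u \<notin> comp c u" unfolding comp_def using tree_bridge[OF tr cu] by simp
              ultimately have "comp c u \<subset> comp u v" by blast
              then show ?thesis using psubset_card_mono[OF finc] cn by simp
            qed
            show ?G
            proof (cases "good (edge_side V E L a u) \<and> good (edge_side V E L b u)")
              case False
              then have "\<not> good (edge_side V E L a u) \<or> \<not> good (edge_side V E L b u)" by blast
              then show ?G
              proof
                assume "\<not> good (edge_side V E L a u)"
                then show ?G using less.IH[OF smaller[OF ab(1,3)]] au by blast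
              next
                assume "\<not> good (edge_side V E L b u)"
                then show ?G using less.IH[OF smaller[OF ab(2,4)]] bu by blast
              qed
            next
              case gab: True
              have gv: "good (edge_side V E L v u)" using excl[OF uv] bad by blast
              have c: "edge_side V E L v u = V - edge_side V E L u v" using side_compl[OF tr bj uv] .
              have sa: "edge_side V E L a u \<subseteq> edge_side V E L u v"
                unfolding edge_side_def using sub_comp[OF tr ab(1,3)] by blast
              have sb: "edge_side V E L b u \<subseteq> edge_side V E L u v"
                unfolding edge_side_def using sub_comp[OF tr ab(2,4)] by blast
              have dab: "edge_side V E L a u \<inter> edge_side V E L b u = {}"
              proof (rule ccontr)
                assume "edge_side V E L a u \<inter> edge_side V E L b u \<noteq> {}"
                then obtain x where "(a, L x) \<in> (adj (E - {{a,u}}))\<^sup>*" "(b, L x) \<in> (adj (E - {{b,u}}))\<^sup>*"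
                  unfolding edge_side_def by blast
                moreover have "{b,u} = {u,b}" by (rule insert_commute)
                ultimately have "(u, L x) \<in> (adj (E - {{u,b}}))\<^sup>*" "(b, L x) \<in> (adj (E - {{u,b}}))\<^sup>*"
                  using sub_comp[OF tr ab(1) ab(5)] by auto
                then show False using two_sides_excl[OF tr ab(2)] by blast
              qed
              have cov: "edge_side V E L a u \<union> edge_side V E L b u \<union> edge_side V E L v u = V"
              proof
                show "edge_side V E L a u \<union> edge_side V E L b u \<union> edge_side V E L v u \<subseteq> V"
                  using side_sub[of V E L a u] side_sub[of V E L b u] side_sub[of V E L v u] by blast
              next
                show "V \<subseteq> edge_side V E L a u \<union> edge_side V E L b u \<union> edge_side V E L v u"
                proof
                  fix x assume x: "x \<in> V"
                  have lN: "L x \<in> N" using leaf_in_N[OF bj x] .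
                  have "L x \<in> leaves N E" using bij_betw_apply[OF bj x] .
                  then have "degree E (L x) = 1" unfolding leaves_def by simp
                  then have ne: "L x \<noteq> u" using d3 by auto
                  have "(u, L x) \<in> (adj E)\<^sup>*" using tree_conn[OF tr uN lN] .
                  from cover3[OF inc this] ne x
                  show "x \<in> edge_side V E L a u \<union> edge_side V E L b u \<union> edge_side V E L v u"
                    unfolding edge_side_def by blast
                qed
              qed
              have h3: "edge_side V E L a u \<inter> edge_side V E L v u = {}" using sa c by blast
              have h4: "edge_side V E L b u \<inter> edge_side V E L v u = {}" using sb c by blast
              have h5: "okc (edge_side V E L a u)" using ok_side[OF au] gab by blast
              have h6: "okc (edge_side V E L b u)" using ok_side[OF bu] gab by blast
              have h7: "okc (edge_side V E L v u)" using ok_side[OF vu gv] .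
              show ?G
                apply (rule fin)
                apply (rule exI[of _ "edge_side V E L a u"], rule exI[of _ "edge_side V E L b u"], rule exI[of _ "edge_side V E L v u"])
                using cov dab h3 h4 h5 h6 h7 by simp
            qed
          qed
        qed
      qed
      from this[of "card (comp u0 v0)"] uv0 show ?thesis by blast
    qed
  qed
qed

end
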